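(* Let $n\ge 1$ and let $\mathcal{R},\mathcal{S}\subseteq 2^{[n]}$ be clutters such that for every partition $[n]=E_0\uplus E_1$ exactly one of the following holds: some member of $\mathcal{R}$ is contained in $E_0$, or some member of $\mathcal{S}$ is contained in $E_1$. Let $K:=2^{[n]}\setminus\widehat{\mathcal{R}}$, where $\widehat{\mathcal{R}}=\{A\subseteq [n]\mid \exists X\in\mathcal{R},\ X\subseteq A\}$, and let $K^\circ=\{[n]\setminus A\mid A\notin K\}$ be its Alexander dual. Suppose $[n]=A_1\uplus\{i\}\uplus A_2$ where every element of $A_1$ is smaller than $i$, every element of $A_2$ is larger than $i$, $A_1\in K$ and $A_2\in K^\circ$ (i.e. $(A_1,A_2;\{i\})$ is the $(n-2)$-dimensional critical simplex of the perfect discrete Morse function on the Bier sphere $K\ast_\Delta K^\circ$). Then \[\min_{I\in\mathcal{R}}\max_{x\in I} x \;=\; i \;=\; \max_{J\in\mathcal{S}}\min_{x\in J} x.\]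
   Context: A clutter on a finite set is a family of subsets none of which contains another. The Bier sphere $Bier(K)=K\ast_\Delta K^\circ$ is the deleted join of $K$ and its Alexander dual; its faces are written as triples $(A_1,A_2;B)$ with $A_1\in K$, $A_2\in K^\circ$, $A_1\cap A_2=\emptyset$ and $B=[n]\setminus(A_1\cup A_2)$. (The real function $f$ on the ground set in the Edmonds–Fulkerson setting is here taken to be the identity on $[n]$.) *)

theory Defs
  imports Main
begin

definition clutter :: "nat \<Rightarrow> nat set set \<Rightarrow> bool" where
  "clutter n R \<longleftrightarrow> R \<subseteq> Pow {1..n} \<and> (\<forall>X\<in>R. \<forall>Y\<in>R. X \<subseteq> Y \<longrightarrow> X = Y)"

definition up_closure :: "nat \<Rightarrow> nat set set \<Rightarrow> nat set set" where
  "up_closure n R = {A. A \<subseteq> {1..n} \<and> (\<exists>X\<in>R. X \<subseteq> A)}"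

definition complex_of :: "nat \<Rightarrow> nat set set \<Rightarrow> nat set set" where
  "complex_of n R = Pow {1..n} - up_closure n R"

definition alexander_dual :: "nat \<Rightarrow> nat set set \<Rightarrow> nat set set" where
  "alexander_dual n K = {{1..n} - A | A. A \<subseteq> {1..n} \<and> A \<notin> K}"

end

theory Submission
  imports Defs
begin

theorem mainTheorem2:
  fixes n i :: nat and R S :: "nat set set" and A1 A2 :: "nat set"
  assumes "n \<ge> 1"
    and "clutter n R" and "clutter n S"
    and "\<forall>E0 E1. E0 \<union> E1 = {1..n} \<and> E0 \<inter> E1 = {} \<longrightarrow>
           ((\<exists>X\<in>R. X \<subseteq> E0) \<noteq> (\<exists>Y\<in>S. Y \<subseteq> E1))"
    and "{1..n} = A1 \<union> {i} \<union> A2" and "i \<notin> A1" and "i \<notin> A2" and "A1 \<inter> A2 = {}"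
    and "\<forall>x\<in>A1. x < i" and "\<forall>x\<in>A2. i < x"
    and "A1 \<in> complex_of n R"
    and "A2 \<in> alexander_dual n (complex_of n R)"
  shows "Min ((\<lambda>I. Max I) ` R) = i \<and> Max ((\<lambda>J. Min J) ` S) = i"
proof -
  note A = assms
  have RP: "R \<subseteq> Pow {1..n}" and SP: "S \<subseteq> Pow {1..n}" using A(2,3) by (auto simp: clutter_def)
  have finR: "finite R" and finS: "finite S"
    using finite_subset[OF RP] finite_subset[OF SP] by auto
  have noA1: "\<not> (\<exists>X\<in>R. X \<subseteq> A1)" using A(11) by (auto simp: complex_of_def up_closure_def)
  obtain B where B: "A2 = {1..n} - B" "B \<subseteq> {1..n}" "B \<notin> complex_of n R"
    using A(12) by (auto simp: alexander_dual_def)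
  have BA: "B = A1 \<union> {i}" using B A(5-8) by auto
  obtain X where X: "X \<in> R" "X \<subseteq> A1 \<union> {i}"
    using B BA by (auto simp: complex_of_def up_closure_def)
  have iX: "i \<in> X" using X noA1 by blast
  have finX: "finite X" using X(1) RP finite_subset[of X "{1..n}"] by auto
  have MX: "Max X = i" using iX X(2) A(9) finX
  proof (intro Max_eqI)
    fix y assume "y \<in> X" then have "y \<in> A1 \<or> y = i" using X(2) by blast
    then show "y \<le> i" using A(9) by fastforce
  qed auto
  have low: "Max I \<ge> i" if "I \<in> R" for I
  proof (rule ccontr)
    assume "\<not> Max I \<ge> i"
    have "I \<subseteq> {1..n}" using that RP by auto
    moreover have fI: "finite I" using calculation finite_subset by auto
    ultimately have "I \<subseteq> A1"
    proof (intro subsetI)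
      fix y assume y: "y \<in> I"
      have "y \<le> Max I" using Max_ge[OF fI y] .
      then have "y < i" using \<open>\<not> Max I \<ge> i\<close> by simp
      moreover have "y \<in> A1 \<union> {i} \<union> A2" using y \<open>I \<subseteq> {1..n}\<close> A(5) by blast
      ultimately show "y \<in> A1" using A(10) by fastforce
    qed
    then show False using noA1 that by blast
  qed
  have P1: "Min ((\<lambda>I. Max I) ` R) = i"
    using finR X(1) MX low by (intro Min_eqI) auto
  have "\<exists>Y\<in>S. Y \<subseteq> {i} \<union> A2"
    using A(4)[rule_format, of A1 "{i} \<union> A2"] noA1 A(5-8) by auto
  then obtain Y where Y: "Y \<in> S" "Y \<subseteq> {i} \<union> A2" by blast
  have noA2: "\<not> (\<exists>Y\<in>S. Y \<subseteq> A2)"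
    using A(4)[rule_format, of "A1 \<union> {i}" A2] X A(5-8) by auto
  have iY: "i \<in> Y" using Y noA2 by blast
  have finY: "finite Y" using Y(1) SP finite_subset[of Y "{1..n}"] by auto
  have MY: "Min Y = i" using iY Y(2) A(10) finY
  proof (intro Min_eqI)
    fix y assume "y \<in> Y" then have "y \<in> A2 \<or> y = i" using Y(2) by blast
    then show "i \<le> y" using A(10) by fastforce
  qed auto
  have up: "Min J \<le> i" if "J \<in> S" for J
  proof (rule ccontr)
    assume c: "\<not> Min J \<le> i"
    have "J \<subseteq> {1..n}" using that SP by auto
    moreover have fJ: "finite J" using calculation finite_subset by auto
    ultimately have "J \<subseteq> A2"
    proof (intro subsetI)
      fix y assume y: "y \<in> J"
      have "Min J \<le> y" using Min_le[OF fJ y] .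
      then have "i < y" using c by simp
      moreover have "y \<in> A1 \<union> {i} \<union> A2" using y \<open>J \<subseteq> {1..n}\<close> A(5) by blast
      ultimately show "y \<in> A2" using A(9) by fastforce
    qed
    then show False using noA2 that by blast
  qed
  have P2: "Max ((\<lambda>J. Min J) ` S) = i"
    using finS Y(1) MY up by (intro Max_eqI) auto
  show ?thesis using P1 P2 by blast
qed

end
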